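(* Let $b,w\ge0$ be integers and let $d_1,\dots,d_{b+1},e_1,\dots,e_{w+1}\in\mathbb N$ satisfy $d_1+\dots+d_{b+1}=b+w+1=e_1+\dots+e_{w+1}$. Let $S$ be the set of spanning trees $t$ of the complete bipartite graph $K_{b+1,w+1}$ with parts $\{a_1,\dots,a_{b+1}\}$ and $\{c_1,\dots,c_{w+1}\}$ such that $t$ contains the edge $\{a_1,c_1\}$, $\deg_t(a_i)=d_i$ for all $i\le b+1$ and $\deg_t(c_j)=e_j$ for all $j\le w+1$. Then $$\#S=\binom{b}{e_1-1,\dots,e_{w+1}-1}\binom{w}{d_1-1,\dots,d_{b+1}-1}\times\begin{cases}1-\dfrac{(b-e_1+1)(w-d_1+1)}{bw},&\text{if }w,b>0,\\[2mm]1,&\text{if }w=0\text{ or }b=0.\end{cases}$$ By symmetry, the same holds when the edge $\{a_1,c_1\}$ is replaced by any prescribed edge $\{a_k,c_m\}$, with $d_1,e_1$ replaced by $d_k,e_m$.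
   Context: $\binom{n}{k_1,\dots,k_r}$ denotes the multinomial coefficient $\frac{n!}{k_1!\cdots k_r!}$ (for $k_1+\dots+k_r=n$). Spanning trees are subgraphs of $K_{b+1,w+1}$ on all $b+w+2$ vertices that are trees; $\deg_t$ is the degree in $t$. *)

theory Defs
  imports Complex_Main
begin

definition multinom :: "nat \<Rightarrow> int list \<Rightarrow> real" where
  "multinom n ks = (if (\<forall>k\<in>set ks. 0 \<le> k) \<and> sum_list ks = int n
     then fact n / (\<Prod>k\<leftarrow>ks. fact (nat k)) else 0)"

text \<open>Vertices of K_{b+1,w+1}: Inl i stands for a_{i+1} (i \<le> b),
  Inr j stands for c_{j+1} (j \<le> w). A subgraph is given by its edge set
  T, where (i,j) \<in> T means the edge {a_{i+1}, c_{j+1}}.\<close>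
definition bip_vertices :: "nat \<Rightarrow> nat \<Rightarrow> (nat + nat) set" where
  "bip_vertices b w = Inl ` {..b} \<union> Inr ` {..w}"

definition bip_adj :: "(nat \<times> nat) set \<Rightarrow> nat + nat \<Rightarrow> nat + nat \<Rightarrow> bool" where
  "bip_adj T u v \<longleftrightarrow> (\<exists>i j. (i, j) \<in> T \<and> {u, v} = {Inl i, Inr j})"

definition bip_connected :: "nat \<Rightarrow> nat \<Rightarrow> (nat \<times> nat) set \<Rightarrow> bool" where
  "bip_connected b w T \<longleftrightarrow>
     (\<forall>u\<in>bip_vertices b w. \<forall>v\<in>bip_vertices b w. (u, v) \<in> {(x, y). bip_adj T x y}\<^sup>*)"

definition bip_has_cycle :: "(nat \<times> nat) set \<Rightarrow> bool" where
  "bip_has_cycle T \<longleftrightarrow> (\<exists>vs. 3 \<le> length vs \<and> distinct vs \<and>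
     (\<forall>k<length vs. bip_adj T (vs ! k) (vs ! ((k + 1) mod length vs))))"

definition bip_spanning_tree :: "nat \<Rightarrow> nat \<Rightarrow> (nat \<times> nat) set \<Rightarrow> bool" where
  "bip_spanning_tree b w T \<longleftrightarrow> T \<subseteq> {..b} \<times> {..w} \<and> bip_connected b w T \<and> \<not> bip_has_cycle T"

definition deg_a :: "(nat \<times> nat) set \<Rightarrow> nat \<Rightarrow> nat" where
  "deg_a T i = card {j. (i, j) \<in> T}"

definition deg_c :: "(nat \<times> nat) set \<Rightarrow> nat \<Rightarrow> nat" where
  "deg_c T j = card {i. (i, j) \<in> T}"

end

theory Submission
  imports Defs
begin


definition conn :: "'v set \<Rightarrow> ('v \<Rightarrow> 'v \<Rightarrow> bool) \<Rightarrow> bool" where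
  "conn V E \<longleftrightarrow> (\<forall>u\<in>V. \<forall>v\<in>V. (u, v) \<in> {(x, y). E x y}\<^sup>*)"

definition cyc :: "('v \<Rightarrow> 'v \<Rightarrow> bool) \<Rightarrow> bool" where
  "cyc E \<longleftrightarrow> (\<exists>vs. 3 \<le> length vs \<and> distinct vs \<and>
     (\<forall>k<length vs. E (vs ! k) (vs ! ((k + 1) mod length vs))))"

definition gtree :: "nat set \<Rightarrow> nat set \<Rightarrow> (nat \<times> nat) set \<Rightarrow> bool" where
  "gtree A C T \<longleftrightarrow> T \<subseteq> A \<times> C \<and> conn (Inl ` A \<union> Inr ` C) (bip_adj T) \<and> \<not> cyc (bip_adj T)"

lemma bip_spanning_tree_gtree: "bip_spanning_tree b w T = gtree {..b} {..w} T"
  unfolding bip_spanning_tree_def gtree_def conn_def cyc_def bip_connected_def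
    bip_has_cycle_def bip_vertices_def by simp

lemma conn_leaf:
  assumes u: "u \<notin> V" and v: "v \<in> V" and nE: "\<And>z. \<not> E z u" "\<And>z. \<not> E u z"
  shows "conn (insert u V) (\<lambda>x y. E x y \<or> {x, y} = {u, v}) \<longleftrightarrow> conn V E"
proof
  let ?E' = "\<lambda>x y. E x y \<or> {x, y} = {u, v}"
  have uv: "u \<noteq> v" using u v by auto
  assume c: "conn (insert u V) ?E'"
  show "conn V E" unfolding conn_def
  proof (intro ballI)
    fix a b assume a: "a \<in> V" and b: "b \<in> V"
    have ab: "(a, b) \<in> {(x, y). ?E' x y}\<^sup>*" using c a b unfolding conn_def by blast
    have au: "a \<noteq> u" using a u by auto
    have gen: "(if y = u then (a, v) else (a, y)) \<in> {(x, y). E x y}\<^sup>*"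
      if "(a, y) \<in> {(x, y). ?E' x y}\<^sup>*" for y
      using that
    proof (induction y rule: rtrancl_induct)
      case base then show ?case using au by simp
    next
      case (step y z)
      from step.hyps(2) have st: "E y z \<or> {y, z} = {u, v}" by simp
      show ?case
      proof (cases "{y, z} = {u, v}")
        case True
        then have "(y = u \<and> z = v) \<or> (y = v \<and> z = u)" by (auto simp: doubleton_eq_iff)
        then show ?thesis using step.IH uv by auto
      next
        case False
        then have "E y z" using st by simp
        then have "y \<noteq> u" "z \<noteq> u" using nE by auto
        then show ?thesis using step.IH \<open>E y z\<close> by (auto intro: rtrancl_into_rtrancl)
      qed
    qed
    from gen[OF ab] show "(a, b) \<in> {(x, y). E x y}\<^sup>*" using b u by (auto split: if_splits)
  qed
next
  let ?E' = "\<lambda>x y. E x y \<or> {x, y} = {u, v}"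
  assume c: "conn V E"
  have sub: "(a, b) \<in> {(x, y). ?E' x y}\<^sup>*" if "(a, b) \<in> {(x, y). E x y}\<^sup>*" for a b
    using rtrancl_mono[of "{(x, y). E x y}" "{(x, y). ?E' x y}"] that by auto
  have uv1: "(u, v) \<in> {(x, y). ?E' x y}\<^sup>*" by (rule r_into_rtrancl) simp
  have vu1: "(v, u) \<in> {(x, y). ?E' x y}\<^sup>*" by (rule r_into_rtrancl) auto
  show "conn (insert u V) ?E'" unfolding conn_def
  proof (intro ballI)
    fix a b assume a: "a \<in> insert u V" and b: "b \<in> insert u V"
    show "(a, b) \<in> {(x, y). ?E' x y}\<^sup>*"
    proof (cases "a = u")
      case True
      show ?thesis
      proof (cases "b = u")
        case True then show ?thesis using \<open>a = u\<close> by simp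
      next
        case False
        then have "b \<in> V" using b by auto
        then have "(v, b) \<in> {(x, y). ?E' x y}\<^sup>*" using c v by (intro sub) (simp add: conn_def)
        from rtrancl_trans[OF uv1 this] show ?thesis using \<open>a = u\<close> by simp
      qed
    next
      case False
      then have aV: "a \<in> V" using a by auto
      show ?thesis
      proof (cases "b = u")
        case True
        have "(a, v) \<in> {(x, y). ?E' x y}\<^sup>*" using c v aV by (intro sub) (simp add: conn_def)
        from rtrancl_trans[OF this vu1] show ?thesis using True by simp
      next
        case False
        then have "b \<in> V" using b by auto
        then show ?thesis using c aV by (intro sub) (simp add: conn_def)
      qed
    qed
  qed
qed

lemma cyc_leaf:
  assumes uv: "u \<noteq> v" and nE: "\<And>z. \<not> E z u" "\<And>z. \<not> E u z"
  shows "cyc (\<lambda>x y. E x y \<or> {x, y} = {u, v}) \<longleftrightarrow> cyc E"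
proof
  assume "cyc E" then show "cyc (\<lambda>x y. E x y \<or> {x, y} = {u, v})" unfolding cyc_def by blast
next
  assume "cyc (\<lambda>x y. E x y \<or> {x, y} = {u, v})"
  then obtain vs where len: "3 \<le> length vs" and dist: "distinct vs"
    and adj: "\<And>k. k < length vs \<Longrightarrow> E (vs ! k) (vs ! ((k + 1) mod length vs)) \<or>
                 {vs ! k, vs ! ((k + 1) mod length vs)} = {u, v}"
    unfolding cyc_def by blast
  define n where "n = length vs"
  show "cyc E"
  proof (cases "u \<in> set vs")
    case False
    have "E (vs ! k) (vs ! ((k + 1) mod n))" if "k < n" for k
    proof -
      have "(k + 1) mod n < n" using len n_def by (intro mod_less_divisor) auto
      then have "vs ! k \<in> set vs" "vs ! ((k + 1) mod n) \<in> set vs" using that n_def by auto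
      then have "u \<notin> {vs ! k, vs ! ((k + 1) mod n)}" using False by auto
      then show ?thesis using adj[of k] that n_def by auto
    qed
    then show ?thesis unfolding cyc_def using len dist n_def by blast
  next
    case True
    then obtain p where p: "p < n" "vs ! p = u" unfolding n_def by (auto simp: in_set_conv_nth)
    define q where "q = (p + 1) mod n"
    define r where "r = (if p = 0 then n - 1 else p - 1)"
    have q: "q < n" unfolding q_def by (rule mod_less_divisor) (use len n_def in linarith)
    have r: "r < n" "(r + 1) mod n = p" using p len n_def r_def by auto
    have qr: "q \<noteq> r"
    proof (cases "p + 1 = n")
      case True then have "q = 0" using q_def by simp
      moreover have "r = p - 1" using True len n_def r_def by auto
      ultimately show ?thesis using True len n_def by auto
    next
      case False then have "q = p + 1" using p q_def by simp
      then show ?thesis using r_def len n_def by auto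
    qed
    have "vs ! q = v"
    proof -
      have "E u (vs ! q) \<or> {u, vs ! q} = {u, v}" using adj[of p] p n_def q_def by auto
      then show ?thesis using nE uv by (auto simp: doubleton_eq_iff)
    qed
    moreover have "vs ! r = v"
    proof -
      have "E (vs ! r) u \<or> {vs ! r, u} = {u, v}" using adj[of r] r p n_def by auto
      then show ?thesis using nE uv by (auto simp: doubleton_eq_iff)
    qed
    ultimately show ?thesis using dist q r qr n_def by (metis nth_eq_iff_index_eq)
  qed
qed

lemma bip_adj_insert:
  "bip_adj (insert (i, j) T) = (\<lambda>x y. bip_adj T x y \<or> {x, y} = {Inl i, Inr j})"
  unfolding bip_adj_def by (auto simp: fun_eq_iff)

lemma bip_adj_noleaf:
  assumes "\<And>j. (i, j) \<notin> T"
  shows "\<not> bip_adj T z (Inl i)" "\<not> bip_adj T (Inl i) z"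
  using assms unfolding bip_adj_def by (auto simp: doubleton_eq_iff)

lemma gtree_insertA:
  assumes "i \<notin> A" "j \<in> C" "T \<subseteq> A \<times> C"
  shows "gtree (insert i A) C (insert (i, j) T) \<longleftrightarrow> gtree A C T"
proof -
  have nT: "\<And>j. (i, j) \<notin> T" using assms by auto
  have V: "Inl ` insert i A \<union> Inr ` C = insert (Inl i) (Inl ` A \<union> Inr ` C)" by auto
  have c: "conn (insert (Inl i) (Inl ` A \<union> Inr ` C)) (\<lambda>x y. bip_adj T x y \<or> {x, y} = {Inl i, Inr j})
      \<longleftrightarrow> conn (Inl ` A \<union> Inr ` C) (bip_adj T)"
    by (rule conn_leaf) (use assms bip_adj_noleaf[OF nT] in auto)
  have y: "cyc (\<lambda>x y. bip_adj T x y \<or> {x, y} = {Inl i, Inr j}) \<longleftrightarrow> cyc (bip_adj T)"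
    by (rule cyc_leaf) (use bip_adj_noleaf[OF nT] in auto)
  show ?thesis unfolding gtree_def bip_adj_insert V c y using assms by blast
qed



definition sw :: "nat + nat \<Rightarrow> nat + nat" where
  "sw x = (case x of Inl a \<Rightarrow> Inr a | Inr a \<Rightarrow> Inl a)"

lemma sw_simps[simp]: "sw (Inl a) = Inr a" "sw (Inr a) = Inl a"
  by (simp_all add: sw_def)

lemma sw_sw[simp]: "sw (sw x) = x" by (cases x) simp_all

lemma inj_sw: "inj sw" by (metis injI sw_sw)

lemma bip_adj_alt: "bip_adj T u v \<longleftrightarrow>
  (\<exists>i j. (i, j) \<in> T \<and> ((u = Inl i \<and> v = Inr j) \<or> (u = Inr j \<and> v = Inl i)))"
  unfolding bip_adj_def by (auto simp: doubleton_eq_iff)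

lemma mem_swap_image: "(a, b) \<in> prod.swap ` T \<longleftrightarrow> (b, a) \<in> T"
  by force

lemma bip_adj_swap: "bip_adj (prod.swap ` T) x y \<longleftrightarrow> bip_adj T (sw x) (sw y)"
  by (cases x; cases y) (auto simp: bip_adj_alt mem_swap_image)

lemma rtrancl_map_pred:
  assumes "(a, b) \<in> {(x, y). E x y}\<^sup>*" "\<And>x y. E x y \<Longrightarrow> E' (f x) (f y)"
  shows "(f a, f b) \<in> {(x, y). E' x y}\<^sup>*"
  using assms(1)
proof (induction rule: rtrancl_induct)
  case base then show ?case by simp
next
  case (step y z)
  then have "E' (f y) (f z)" using assms(2) by simp
  then show ?case using step.IH by (simp add: rtrancl_into_rtrancl)
qed

lemma gtree_swap:
  assumes "gtree A C T" shows "gtree C A (prod.swap ` T)"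
proof -
  have sub: "T \<subseteq> A \<times> C" and c: "conn (Inl ` A \<union> Inr ` C) (bip_adj T)"
    and nc: "\<not> cyc (bip_adj T)"
    using assms unfolding gtree_def by auto
  have 1: "prod.swap ` T \<subseteq> C \<times> A" using sub by auto
  have 2: "conn (Inl ` C \<union> Inr ` A) (bip_adj (prod.swap ` T))"
    unfolding conn_def
  proof (intro ballI)
    fix u v assume u: "u \<in> Inl ` C \<union> Inr ` A" and v: "v \<in> Inl ` C \<union> Inr ` A"
    have "sw u \<in> Inl ` A \<union> Inr ` C" "sw v \<in> Inl ` A \<union> Inr ` C" using u v by auto
    then have "(sw u, sw v) \<in> {(x, y). bip_adj T x y}\<^sup>*" using c unfolding conn_def by blast
    then have "(sw (sw u), sw (sw v)) \<in> {(x, y). bip_adj (prod.swap ` T) x y}\<^sup>*"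
      by (rule rtrancl_map_pred) (simp add: bip_adj_swap)
    then show "(u, v) \<in> {(x, y). bip_adj (prod.swap ` T) x y}\<^sup>*" by simp
  qed
  have 3: "\<not> cyc (bip_adj (prod.swap ` T))"
  proof
    assume "cyc (bip_adj (prod.swap ` T))"
    then obtain vs where len: "3 \<le> length vs" and dist: "distinct vs"
      and adj: "\<And>k. k < length vs \<Longrightarrow> bip_adj (prod.swap ` T) (vs ! k) (vs ! ((k + 1) mod length vs))"
      unfolding cyc_def by blast
    have "bip_adj T (map sw vs ! k) (map sw vs ! ((k + 1) mod length (map sw vs)))"
      if k: "k < length (map sw vs)" for k
    proof -
      have m: "(k + 1) mod length vs < length vs" by (rule mod_less_divisor) (use len in linarith)
      show ?thesis using adj[of k] k m by (simp add: bip_adj_swap)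
    qed
    moreover have "distinct (map sw vs)" using dist inj_sw by (simp add: distinct_map inj_on_def)
    ultimately have "cyc (bip_adj T)" unfolding cyc_def using len
      by (intro exI[of _ "map sw vs"]) simp
    then show False using nc by simp
  qed
  show ?thesis using 1 2 3 unfolding gtree_def by simp
qed

definition trs :: "nat set \<Rightarrow> nat set \<Rightarrow> (nat \<Rightarrow> nat) \<Rightarrow> (nat \<Rightarrow> nat) \<Rightarrow> (nat \<times> nat) set set" where
  "trs A C d e = {T. gtree A C T \<and> (\<forall>i\<in>A. deg_a T i = d i) \<and> (\<forall>j\<in>C. deg_c T j = e j)}"

lemma deg_swap: "deg_a (prod.swap ` T) j = deg_c T j" "deg_c (prod.swap ` T) i = deg_a T i"
  unfolding deg_a_def deg_c_def by (simp_all add: mem_swap_image)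

lemma trs_swap_mem: "T \<in> trs A C d e \<Longrightarrow> prod.swap ` T \<in> trs C A e d"
  unfolding trs_def by (auto simp: deg_swap gtree_swap)

lemma swap_swap_image[simp]: "prod.swap ` prod.swap ` T = T"
  by (simp add: image_image)

lemma card_trs_swap:
  "card {T \<in> trs C A e d. P T} = card {T \<in> trs A C d e. P (prod.swap ` T)}"
proof -
  have eq: "{T \<in> trs C A e d. P T} = (\<lambda>T. prod.swap ` T) ` {T \<in> trs A C d e. P (prod.swap ` T)}"
  proof (intro equalityI subsetI)
    fix T assume "T \<in> {T \<in> trs C A e d. P T}"
    then have "prod.swap ` T \<in> {T \<in> trs A C d e. P (prod.swap ` T)}"
      using trs_swap_mem[of T C A e d] by simp
    then show "T \<in> (\<lambda>T. prod.swap ` T) ` {T \<in> trs A C d e. P (prod.swap ` T)}"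
      by (metis (no_types, lifting) image_eqI swap_swap_image)
  next
    fix T assume "T \<in> (\<lambda>T. prod.swap ` T) ` {T \<in> trs A C d e. P (prod.swap ` T)}"
    then show "T \<in> {T \<in> trs C A e d. P T}" using trs_swap_mem by auto
  qed
  have inj: "inj_on (\<lambda>T. prod.swap ` T) {T \<in> trs A C d e. P (prod.swap ` T)}"
    by (rule inj_onI) (metis swap_swap_image)
  show ?thesis unfolding eq using card_image[OF inj] .
qed

lemma finite_trs: "finite A \<Longrightarrow> finite C \<Longrightarrow> finite (trs A C d e)"
  by (rule finite_subset[of _ "Pow (A \<times> C)"]) (auto simp: trs_def gtree_def)

lemma gtree_degA:
  assumes "gtree A C T" "i \<in> A" "C \<noteq> {}"
  shows "\<exists>j. (i, j) \<in> T"
proof -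
  obtain j where j: "j \<in> C" using assms by auto
  have "(Inl i, Inr j) \<in> {(x, y). bip_adj T x y}\<^sup>*"
    using assms j unfolding gtree_def conn_def by blast
  then obtain z where "bip_adj T (Inl i) z" by (cases rule: converse_rtranclE) auto
  then show ?thesis unfolding bip_adj_alt by auto
qed

lemma gtree_degC:
  assumes "gtree A C T" "j \<in> C" "A \<noteq> {}"
  shows "\<exists>i. (i, j) \<in> T"
proof -
  obtain i where i: "i \<in> A" using assms by auto
  have "(Inr j, Inl i) \<in> {(x, y). bip_adj T x y}\<^sup>*"
    using assms i unfolding gtree_def conn_def by blast
  then obtain z where "bip_adj T (Inr j) z" by (cases rule: converse_rtranclE) auto
  then show ?thesis unfolding bip_adj_alt by auto
qed

lemma trs_zeroA:
  assumes "finite A" "finite C" "i \<in> A" "C \<noteq> {}" "d i = 0"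
  shows "trs A C d e = {}"
proof (rule ccontr)
  assume "trs A C d e \<noteq> {}"
  then obtain T where "T \<in> trs A C d e" by auto
  then have g: "gtree A C T" and da: "deg_a T i = d i" unfolding trs_def using assms by auto
  obtain j where j: "(i, j) \<in> T" using gtree_degA[OF g] assms by auto
  have "finite T" using g assms unfolding gtree_def by (meson finite_SigmaI finite_subset)
  moreover have "{j. (i, j) \<in> T} \<subseteq> snd ` T" by force
  ultimately have "finite {j. (i, j) \<in> T}" using finite_subset by blast
  then have "card {j. (i, j) \<in> T} \<noteq> 0" using j by auto
  then show False using da assms unfolding deg_a_def by simp
qed

lemma trs_zeroC:
  assumes "finite A" "finite C" "j \<in> C" "A \<noteq> {}" "e j = 0"
  shows "trs A C d e = {}"
proof (rule ccontr)
  assume "trs A C d e \<noteq> {}"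
  then obtain T where "T \<in> trs A C d e" by auto
  then have g: "gtree A C T" and dc: "deg_c T j = e j" unfolding trs_def using assms by auto
  obtain i where i: "(i, j) \<in> T" using gtree_degC[OF g] assms by auto
  have "finite T" using g assms unfolding gtree_def by (meson finite_SigmaI finite_subset)
  moreover have "{i. (i, j) \<in> T} \<subseteq> fst ` T" by force
  ultimately have "finite {i. (i, j) \<in> T}" using finite_subset by blast
  then have "card {i. (i, j) \<in> T} \<noteq> 0" using i by auto
  then show False using dc assms unfolding deg_c_def by simp
qed

lemma gtree_empty: "gtree {} {j} {}"
proof -
  have "\<not> cyc (bip_adj {})"
  proof
    assume "cyc (bip_adj {})"
    then obtain vs where l: "3 \<le> length vs" and adj: "\<forall>k<length vs. bip_adj {} (vs ! k) (vs ! ((k + 1) mod length vs))"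
      unfolding cyc_def by blast
    have "(0::nat) < length vs" using l by linarith
    then have "bip_adj {} (vs ! 0) (vs ! ((0 + 1) mod length vs))" using adj by blast
    then show False by (simp add: bip_adj_def)
  qed
  then show ?thesis unfolding gtree_def conn_def by auto
qed

lemma trs_single:
  assumes "d i = 1" "e j = 1"
  shows "trs {i} {j} d e = {{(i, j)}}"
proof (intro equalityI subsetI)
  fix T assume T: "T \<in> trs {i} {j} d e"
  then have sub: "T \<subseteq> {i} \<times> {j}" and "deg_a T i = 1" unfolding trs_def gtree_def using assms by auto
  then have "{j'. (i, j') \<in> T} \<noteq> {}" unfolding deg_a_def by (metis card.empty zero_neq_one)
  then show "T \<in> {{(i, j)}}" using sub by auto
next
  fix T assume "T \<in> {{(i, j)}}"
  then have T: "T = {(i, j)}" by simp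
  have "gtree (insert i {}) {j} (insert (i, j) {})"
    using gtree_insertA[of i "{}" j "{j}" "{}"] gtree_empty by simp
  moreover have "deg_a {(i, j)} i = 1" "deg_c {(i, j)} j = 1" unfolding deg_a_def deg_c_def by simp_all
  ultimately show "T \<in> trs {i} {j} d e" unfolding trs_def T using assms by simp
qed



lemma trs_leaf:
  assumes fin: "finite A" "finite C" and i: "i \<in> A" and di: "d i = 1" and e1: "\<forall>j\<in>C. 1 \<le> e j"
  shows "{T \<in> trs A C d e. P T} =
    (\<Union>j\<in>C. insert (i, j) ` {T' \<in> trs (A - {i}) C d (e(j := e j - 1)). P (insert (i, j) T')})"
proof (intro equalityI subsetI)
  have A: "insert i (A - {i}) = A" using i by auto
  fix T assume "T \<in> {T \<in> trs A C d e. P T}"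
  then have g: "gtree A C T" and da: "\<forall>i\<in>A. deg_a T i = d i" and dc: "\<forall>j\<in>C. deg_c T j = e j"
    and P: "P T" unfolding trs_def by auto
  have sub: "T \<subseteq> A \<times> C" using g gtree_def by auto
  have "card {j. (i, j) \<in> T} = 1" using da i di deg_a_def by auto
  then obtain j where j: "{j'. (i, j') \<in> T} = {j}" by (auto simp: card_1_singleton_iff)
  have jC: "j \<in> C" using j sub by auto
  define T' where "T' = T - {(i, j)}"
  have T: "T = insert (i, j) T'" using j T'_def by auto
  have sub': "T' \<subseteq> (A - {i}) \<times> C" using sub j T'_def by auto
  have g': "gtree (A - {i}) C T'" using gtree_insertA[of i "A - {i}" j C T'] g sub' jC A T by auto
  have da': "\<forall>i'\<in>A - {i}. deg_a T' i' = d i'"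
  proof
    fix i' assume i': "i' \<in> A - {i}"
    then have "{j'. (i', j') \<in> T'} = {j'. (i', j') \<in> T}" using T'_def by auto
    then show "deg_a T' i' = d i'" using da i' deg_a_def by auto
  qed
  have dc': "\<forall>j'\<in>C. deg_c T' j' = (e(j := e j - 1)) j'"
  proof
    fix j' assume j': "j' \<in> C"
    show "deg_c T' j' = (e(j := e j - 1)) j'"
    proof (cases "j' = j")
      case True
      have "{i'. (i', j) \<in> T'} = {i'. (i', j) \<in> T} - {i}" using T'_def by auto
      moreover have "i \<in> {i'. (i', j) \<in> T}" using j by auto
      moreover have "finite {i'. (i', j) \<in> T}"
        using sub fin by (rule_tac finite_subset[of _ A]) auto
      ultimately have "card {i'. (i', j) \<in> T'} = card {i'. (i', j) \<in> T} - 1" by simp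
      then show ?thesis using True dc jC deg_c_def by auto
    next
      case False
      have "{i'. (i', j') \<in> T'} = {i'. (i', j') \<in> T}" using T'_def False by auto
      then show ?thesis using False dc j' deg_c_def by auto
    qed
  qed
  have "T' \<in> {T' \<in> trs (A - {i}) C d (e(j := e j - 1)). P (insert (i, j) T')}"
    using g' da' dc' P T unfolding trs_def by auto
  then show "T \<in> (\<Union>j\<in>C. insert (i, j) ` {T' \<in> trs (A - {i}) C d (e(j := e j - 1)). P (insert (i, j) T')})"
    using jC T by blast
next
  have A: "insert i (A - {i}) = A" using i by auto
  fix T assume "T \<in> (\<Union>j\<in>C. insert (i, j) ` {T' \<in> trs (A - {i}) C d (e(j := e j - 1)). P (insert (i, j) T')})"
  then obtain j T' where jC: "j \<in> C" and T: "T = insert (i, j) T'"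
    and T': "T' \<in> trs (A - {i}) C d (e(j := e j - 1))" and P: "P (insert (i, j) T')"
    by blast
  have g': "gtree (A - {i}) C T'" and da': "\<forall>i'\<in>A - {i}. deg_a T' i' = d i'"
    and dc': "\<forall>j'\<in>C. deg_c T' j' = (e(j := e j - 1)) j'"
    using T' unfolding trs_def by auto
  have sub': "T' \<subseteq> (A - {i}) \<times> C" using g' gtree_def by auto
  have g: "gtree A C T" using gtree_insertA[of i "A - {i}" j C T'] sub' jC A T g' by auto
  have da: "\<forall>i'\<in>A. deg_a T i' = d i'"
  proof
    fix i' assume i': "i' \<in> A"
    show "deg_a T i' = d i'"
    proof (cases "i' = i")
      case True
      have "{j'. (i, j') \<in> T} = {j}" using T sub' by auto
      then show ?thesis using True di deg_a_def by simp
    next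
      case False
      have "{j'. (i', j') \<in> T} = {j'. (i', j') \<in> T'}" using T False by auto
      then show ?thesis using False da' i' deg_a_def by simp
    qed
  qed
  have dc: "\<forall>j'\<in>C. deg_c T j' = e j'"
  proof
    fix j' assume j': "j' \<in> C"
    show "deg_c T j' = e j'"
    proof (cases "j' = j")
      case True
      have "{i'. (i', j) \<in> T} = insert i {i'. (i', j) \<in> T'}" using T by auto
      moreover have "i \<notin> {i'. (i', j) \<in> T'}" using sub' by auto
      moreover have "finite {i'. (i', j) \<in> T'}"
        using sub' fin by (rule_tac finite_subset[of _ A]) auto
      ultimately have "card {i'. (i', j) \<in> T} = Suc (card {i'. (i', j) \<in> T'})" by simp
      then show ?thesis using True dc' jC e1 deg_c_def by auto
    next
      case False
      have "{i'. (i', j') \<in> T} = {i'. (i', j') \<in> T'}" using T False by auto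
      then show ?thesis using False dc' j' deg_c_def by simp
    qed
  qed
  show "T \<in> {T \<in> trs A C d e. P T}" using g da dc P T unfolding trs_def by auto
qed

lemma card_leaf:
  assumes fin: "finite A" "finite C" and i: "i \<in> A" and di: "d i = 1" and e1: "\<forall>j\<in>C. 1 \<le> e j"
  shows "card {T \<in> trs A C d e. P T} =
    (\<Sum>j\<in>C. card {T' \<in> trs (A - {i}) C d (e(j := e j - 1)). P (insert (i, j) T')})"
proof -
  define X where "X = (\<lambda>j. {T' \<in> trs (A - {i}) C d (e(j := e j - 1)). P (insert (i, j) T')})"
  have finX: "finite (X j)" for j
    unfolding X_def by (rule finite_subset[OF _ finite_trs[of "A - {i}" C d "e(j := e j - 1)"]]) (use fin in auto)
  have sub: "T' \<subseteq> (A - {i}) \<times> C" if "T' \<in> X j" for T' j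
    using that unfolding X_def trs_def gtree_def by auto
  have "card (\<Union>j\<in>C. insert (i, j) ` X j) = (\<Sum>j\<in>C. card (insert (i, j) ` X j))"
  proof (rule card_UN_disjoint)
    show "finite C" by (rule fin)
    show "\<forall>j\<in>C. finite (insert (i, j) ` X j)" using finX by auto
    show "\<forall>j1\<in>C. \<forall>j2\<in>C. j1 \<noteq> j2 \<longrightarrow> insert (i, j1) ` X j1 \<inter> insert (i, j2) ` X j2 = {}"
    proof (intro ballI impI)
      fix j1 j2 assume "j1 \<in> C" "j2 \<in> C" "j1 \<noteq> j2"
      show "insert (i, j1) ` X j1 \<inter> insert (i, j2) ` X j2 = {}"
      proof (rule ccontr)
        assume "insert (i, j1) ` X j1 \<inter> insert (i, j2) ` X j2 \<noteq> {}"
        then obtain T1 T2 where T1: "T1 \<in> X j1" and T2: "T2 \<in> X j2"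
          and eq: "insert (i, j1) T1 = insert (i, j2) T2" by blast
        then have "(i, j1) \<in> insert (i, j2) T2" by blast
        then have "(i, j1) \<in> T2" using \<open>j1 \<noteq> j2\<close> by simp
        then show False using sub[OF T2] by auto
      qed
    qed
  qed
  also have "\<dots> = (\<Sum>j\<in>C. card (X j))"
  proof (rule sum.cong[OF refl])
    fix j assume "j \<in> C"
    have "inj_on (insert (i, j)) (X j)"
    proof (rule inj_onI)
      fix T1 T2 assume "T1 \<in> X j" "T2 \<in> X j" "insert (i, j) T1 = insert (i, j) T2"
      moreover have "(i, j) \<notin> T1" "(i, j) \<notin> T2" using sub \<open>T1 \<in> X j\<close> \<open>T2 \<in> X j\<close> by auto
      ultimately show "T1 = T2" by (simp add: insert_ident)
    qed
    then show "card (insert (i, j) ` X j) = card (X j)" by (rule card_image)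
  qed
  finally show ?thesis using trs_leaf[of A C i d e P, OF assms] unfolding X_def by simp
qed



definition Mu :: "nat \<Rightarrow> ('a \<Rightarrow> int) \<Rightarrow> 'a set \<Rightarrow> real" where
  "Mu n x S = (if (\<forall>j\<in>S. 0 \<le> x j) \<and> sum x S = int n
     then fact n / (\<Prod>j\<in>S. fact (nat (x j))) else 0)"

lemma sum_upd: "finite S \<Longrightarrow> j \<in> S \<Longrightarrow> sum (f(j := v)) S = v + sum f (S - {j})"
  by (subst sum.remove[of S j]) (auto intro!: sum.cong)

lemma prod_upd: "finite S \<Longrightarrow> j \<in> S \<Longrightarrow> prod (f(j := v)) S = v * prod f (S - {j})"
  by (subst prod.remove[of S j]) (auto intro!: prod.cong)

lemma Mu_neg: "j \<in> S \<Longrightarrow> x j < 0 \<Longrightarrow> Mu n x S = 0"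
  unfolding Mu_def by force

lemma Mu_remove0:
  assumes fin: "finite S" and j: "j \<in> S" and x: "x j = 0"
  shows "Mu n x (S - {j}) = Mu n x S"
proof -
  have s: "sum x S = sum x (S - {j})" using sum.remove[OF fin j, of x] x by simp
  have p: "(\<Prod>l\<in>S. fact (nat (x l))::real) = (\<Prod>l\<in>S - {j}. fact (nat (x l)))"
    using prod.remove[OF fin j, of "\<lambda>l. fact (nat (x l))::real"] x by simp
  have c: "(\<forall>l\<in>S. 0 \<le> x l) \<longleftrightarrow> (\<forall>l\<in>S - {j}. 0 \<le> x l)" using x j by auto
  show ?thesis unfolding Mu_def s p c by simp
qed

lemma Mu_dec:
  assumes fin: "finite S" and j: "j \<in> S" and n: "1 \<le> n"
  shows "Mu (n - 1) (x(j := x j - 1)) S = Mu n x S * of_int (x j) / real n"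
proof (cases "1 \<le> x j")
  case False
  have l: "Mu (n - 1) (x(j := x j - 1)) S = 0"
    using Mu_neg[of j S "x(j := x j - 1)"] j False by simp
  have "Mu n x S * of_int (x j) = 0"
  proof (cases "x j = 0")
    case False
    then have "x j < 0" using \<open>\<not> 1 \<le> x j\<close> by simp
    then show ?thesis using Mu_neg[OF j] by simp
  qed simp
  then show ?thesis using l by simp
next
  case True
  let ?x' = "x(j := x j - 1)"
  have sum': "sum ?x' S = sum x S - 1"
    using sum_upd[OF fin j, of x "x j - 1"] sum.remove[OF fin j, of x] by simp
  have nonneg: "(\<forall>l\<in>S. 0 \<le> ?x' l) \<longleftrightarrow> (\<forall>l\<in>S. 0 \<le> x l)" using True j by auto
  have cond: "((\<forall>l\<in>S. 0 \<le> ?x' l) \<and> sum ?x' S = int (n - 1)) \<longleftrightarrow>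
      ((\<forall>l\<in>S. 0 \<le> x l) \<and> sum x S = int n)" using sum' nonneg n by auto
  show ?thesis
  proof (cases "(\<forall>l\<in>S. 0 \<le> x l) \<and> sum x S = int n")
    case False
    have l: "Mu (n - 1) ?x' S = 0" unfolding Mu_def by (rule if_not_P) (use False cond in blast)
    have r: "Mu n x S = 0" unfolding Mu_def by (rule if_not_P) (use False in blast)
    show ?thesis using l r by simp
  next
    case c: True
    define P where "P = (\<Prod>l\<in>S - {j}. fact (nat (x l))::real)"
    have p: "(\<Prod>l\<in>S. fact (nat (x l))::real) = fact (nat (x j)) * P"
      using prod.remove[OF fin j, of "\<lambda>l. fact (nat (x l))::real"] P_def by simp
    have p': "(\<Prod>l\<in>S. fact (nat (?x' l))::real) = fact (nat (x j - 1)) * P"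
    proof -
      have "(\<Prod>l\<in>S. fact (nat (?x' l))::real) = fact (nat (?x' j)) * (\<Prod>l\<in>S - {j}. fact (nat (?x' l)))"
        by (rule prod.remove[OF fin j])
      also have "(\<Prod>l\<in>S - {j}. fact (nat (?x' l))::real) = P" unfolding P_def by (rule prod.cong) auto
      finally show ?thesis by simp
    qed
    have nj: "nat (x j) = Suc (nat (x j - 1))" using True by simp
    have f1: "fact (nat (x j)) = (of_int (x j) :: real) * fact (nat (x j - 1))"
      unfolding nj fact_Suc using True by simp
    have f2: "(fact n :: real) = real n * fact (n - 1)" using n by (simp add: fact_reduce)
    have P0: "P \<noteq> 0" unfolding P_def using fin by (simp add: prod_zero_iff)
    have f0: "(fact (nat (x j - 1)) :: real) \<noteq> 0" by simp
    have xj0: "(of_int (x j) :: real) \<noteq> 0" using True by simp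
    have n0: "real n \<noteq> 0" using n by simp
    have e1: "Mu (n - 1) ?x' S = fact (n - 1) / (fact (nat (x j - 1)) * P)"
      using c cond unfolding Mu_def p' by simp
    have e2: "Mu n x S = real n * fact (n - 1) / (of_int (x j) * fact (nat (x j - 1)) * P)"
      using c unfolding Mu_def p f1 f2 by simp
    show ?thesis unfolding e1 e2 using P0 f0 xj0 n0 by (simp add: field_simps)
  qed
qed

definition FN :: "nat set \<Rightarrow> nat set \<Rightarrow> (nat \<Rightarrow> nat) \<Rightarrow> (nat \<Rightarrow> nat) \<Rightarrow> real" where
  "FN A C d e = Mu (card A - 1) (\<lambda>j. int (e j) - 1) C * Mu (card C - 1) (\<lambda>i. int (d i) - 1) A"

lemma FN_swap: "FN C A e d = FN A C d e" by (simp add: FN_def mult.commute)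

lemma FN_dec:
  assumes fin: "finite A" "finite C" and i: "i \<in> A" and di: "d i = 1" and cA: "2 \<le> card A"
    and j: "j \<in> C" and ej: "1 \<le> e j"
  shows "FN (A - {i}) C d (e(j := e j - 1)) = FN A C d e * (real (e j) - 1) / real (card A - 1)"
proof -
  let ?x = "\<lambda>j. int (e j) - 1" and ?y = "\<lambda>i. int (d i) - 1"
  have ex: "(\<lambda>j'. int ((e(j := e j - 1)) j') - 1) = ?x(j := ?x j - 1)" using ej by (auto simp: fun_eq_iff)
  have ca: "card (A - {i}) - 1 = card A - 1 - 1" using fin i by simp
  have 1: "Mu (card A - 1 - 1) (?x(j := ?x j - 1)) C = Mu (card A - 1) ?x C * of_int (?x j) / real (card A - 1)"
    by (rule Mu_dec) (use fin j cA in auto)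
  have 2: "Mu (card C - 1) ?y (A - {i}) = Mu (card C - 1) ?y A"
    by (rule Mu_remove0) (use fin i di in auto)
  show ?thesis unfolding FN_def ex ca 1 2 using ej by (simp add: of_nat_diff)
qed

lemma sum_dec_nat:
  assumes "finite C" "j \<in> C" "1 \<le> (e j :: nat)"
  shows "sum (e(j := e j - 1)) C = sum e C - 1"
  using sum_upd[OF assms(1,2), of e "e j - 1"] sum.remove[OF assms(1,2), of e] assms(3) by simp

lemma sum_minus1:
  assumes "finite C" "sum e C = card A + card C - 1" "1 \<le> card A"
  shows "(\<Sum>j\<in>C. real (e j) - 1) = real (card A - 1)"
proof -
  have "(\<Sum>j\<in>C. real (e j) - 1) = real (sum e C) - real (card C)"
    by (simp add: sum_subtractf)
  then show ?thesis using assms by (simp add: of_nat_diff)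
qed

lemma leaf_exists:
  assumes fin: "finite A" "finite C" "A \<noteq> {}" "C \<noteq> {}"
    and d1: "\<forall>i\<in>A. 1 \<le> d i" and e1: "\<forall>j\<in>C. 1 \<le> e j"
    and sd: "sum d A = card A + card C - 1" and se: "sum e C = card A + card C - 1"
    and nb: "\<not> (card A = 1 \<and> card C = 1)"
  shows "(\<exists>i\<in>A. d i = 1 \<and> 2 \<le> card A) \<or> (\<exists>j\<in>C. e j = 1 \<and> 2 \<le> card C)"
proof (rule ccontr)
  assume na: "\<not> ?thesis"
  have hA: "\<forall>i\<in>A. 2 \<le> d i" if "2 \<le> card A"
  proof
    fix i assume "i \<in> A" then show "2 \<le> d i" using na d1 that by force
  qed
  have hC: "\<forall>j\<in>C. 2 \<le> e j" if "2 \<le> card C"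
  proof
    fix j assume "j \<in> C" then show "2 \<le> e j" using na e1 that by force
  qed
  have cA: "1 \<le> card A" "1 \<le> card C" using fin by (simp_all add: Suc_le_eq card_gt_0_iff)
  have sA: "2 * card A \<le> sum d A" if "2 \<le> card A"
    using sum_mono[of A "\<lambda>_. 2" d] hA[OF that] by auto
  have sC: "2 * card C \<le> sum e C" if "2 \<le> card C"
    using sum_mono[of C "\<lambda>_. 2" e] hC[OF that] by auto
  show False
  proof (cases "2 \<le> card A")
    case TA: True
    note a = sA[OF TA]
    show False
    proof (cases "2 \<le> card C")
      case True then show False using a sC[OF True] sd se by linarith
    next
      case False then have "card C = 1" using cA by linarith
      then show False using a sd TA by simp
    qed
  next
    case False then have "card A = 1" using cA by linarith
    moreover have "2 \<le> card C" using nb cA \<open>card A = 1\<close> by linarith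
    ultimately show False using sC se by fastforce
  qed
qed

lemma N_stepA:
  assumes fin: "finite A" "finite C" and i: "i \<in> A" and di: "d i = 1" and cA: "2 \<le> card A"
    and Cne: "C \<noteq> {}" and e1: "\<forall>j\<in>C. 1 \<le> e j"
    and se: "sum e C = card A + card C - 1"
    and IH: "\<And>e'. sum e' C = card (A - {i}) + card C - 1 \<Longrightarrow>
                real (card (trs (A - {i}) C d e')) = FN (A - {i}) C d e'"
  shows "real (card (trs A C d e)) = FN A C d e"
proof -
  have "card (trs A C d e) = (\<Sum>j\<in>C. card (trs (A - {i}) C d (e(j := e j - 1))))"
    using card_leaf[of A C i d e "\<lambda>_. True", OF fin i di e1] by simp
  then have "real (card (trs A C d e)) = (\<Sum>j\<in>C. real (card (trs (A - {i}) C d (e(j := e j - 1)))))"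
    by simp
  also have "\<dots> = (\<Sum>j\<in>C. FN (A - {i}) C d (e(j := e j - 1)))"
  proof (rule sum.cong[OF refl])
    fix j assume j: "j \<in> C"
    have "sum (e(j := e j - 1)) C = card (A - {i}) + card C - 1"
      using sum_dec_nat[OF fin(2) j, of e] e1 j se fin i cA by simp
    then show "real (card (trs (A - {i}) C d (e(j := e j - 1)))) = FN (A - {i}) C d (e(j := e j - 1))"
      by (rule IH)
  qed
  also have "\<dots> = (\<Sum>j\<in>C. FN A C d e * (real (e j) - 1) / real (card A - 1))"
    by (rule sum.cong[OF refl], rule FN_dec) (use fin i di cA e1 in auto)
  also have "\<dots> = FN A C d e * (\<Sum>j\<in>C. real (e j) - 1) / real (card A - 1)"
    by (simp add: sum_distrib_left sum_divide_distrib)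
  also have "(\<Sum>j\<in>C. real (e j) - 1) = real (card A - 1)"
    by (rule sum_minus1) (use fin se cA in auto)
  finally show ?thesis using cA by simp
qed



lemma card_diff_sum:
  assumes "finite A" "i \<in> A" "d i = 1" "2 \<le> card A" "sum d A = card A + card C - 1"
  shows "sum d (A - {i}) = card (A - {i}) + card C - 1"
  using assms by (simp add: sum_diff1_nat)

theorem N_formula:
  "finite A \<Longrightarrow> finite C \<Longrightarrow> A \<noteq> {} \<Longrightarrow> C \<noteq> {} \<Longrightarrow>
   sum d A = card A + card C - 1 \<Longrightarrow> sum e C = card A + card C - 1 \<Longrightarrow>
   real (card (trs A C d e)) = FN A C d e"
proof (induction "card A + card C" arbitrary: A C d e rule: less_induct)
  case less
  note fA = less.prems(1) and fC = less.prems(2) and Ane = less.prems(3) and Cne = less.prems(4)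
    and sd = less.prems(5) and se = less.prems(6)
  show ?case
  proof (cases "\<exists>i\<in>A. d i = 0")
    case True
    then obtain i where i: "i \<in> A" "d i = 0" by blast
    have "trs A C d e = {}" by (rule trs_zeroA) (use fA fC i Cne in auto)
    moreover have "FN A C d e = 0" using Mu_neg[of i A "\<lambda>i. int (d i) - 1"] i unfolding FN_def by simp
    ultimately show ?thesis by simp
  next
    case nd: False
    show ?thesis
    proof (cases "\<exists>j\<in>C. e j = 0")
      case True
      then obtain j where j: "j \<in> C" "e j = 0" by blast
      have "trs A C d e = {}" by (rule trs_zeroC) (use fA fC j Ane in auto)
      moreover have "FN A C d e = 0" using Mu_neg[of j C "\<lambda>j. int (e j) - 1"] j unfolding FN_def by simp
      ultimately show ?thesis by simp
    next
      case ne: False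
      have d1: "\<forall>i\<in>A. 1 \<le> d i" using nd by (auto simp: Suc_le_eq)
      have e1: "\<forall>j\<in>C. 1 \<le> e j" using ne by (auto simp: Suc_le_eq)
      show ?thesis
      proof (cases "card A = 1 \<and> card C = 1")
        case True
        then obtain i j where A: "A = {i}" and C: "C = {j}" by (auto simp: card_1_singleton_iff)
        have di: "d i = 1" "e j = 1" using sd se A C by auto
        show ?thesis unfolding A C trs_single[of d i e j, OF di] using di by (simp add: FN_def Mu_def)
      next
        case False
        from leaf_exists[OF fA fC Ane Cne d1 e1 sd se False]
        consider (a) i where "i \<in> A" "d i = 1" "2 \<le> card A" | (c) j where "j \<in> C" "e j = 1" "2 \<le> card C"
          by blast
        then show ?thesis
        proof cases
          case a
          have "card (A - {i}) \<noteq> 0" using a fA by (simp add: card_Diff_singleton)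
          then have Ai: "A - {i} \<noteq> {}" by (metis card.empty)
          show ?thesis
          proof (rule N_stepA[of A C i d e, OF fA fC a Cne e1 se])
            fix e' assume "sum e' C = card (A - {i}) + card C - 1"
            then show "real (card (trs (A - {i}) C d e')) = FN (A - {i}) C d e'"
              using card_diff_sum[of A i d C, OF fA a sd] fA fC Cne a Ai
              by (intro less.hyps) (auto simp: card_Diff_singleton)
          qed
        next
          case c
          have "card (C - {j}) \<noteq> 0" using c fC by (simp add: card_Diff_singleton)
          then have Cj: "C - {j} \<noteq> {}" by (metis card.empty)
          have sd': "sum e C = card C + card A - 1" using se by simp
          have "real (card (trs C A e d)) = FN C A e d"
          proof (rule N_stepA[of C A j e d, OF fC fA c Ane d1])
            show "sum d A = card C + card A - 1" using sd by simp
            fix d' assume "sum d' A = card (C - {j}) + card A - 1"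
            then show "real (card (trs (C - {j}) A e d')) = FN (C - {j}) A e d'"
              using card_diff_sum[of C j e A, OF fC c sd'] fA fC Ane c Cj
              by (intro less.hyps) (auto simp: card_Diff_singleton)
          qed
          then show ?thesis using card_trs_swap[of C A e d "\<lambda>_. True"] FN_swap[of C A e d] by simp
        qed
      qed
    qed
  qed
qed



definition GM :: "nat set \<Rightarrow> nat set \<Rightarrow> (nat \<Rightarrow> nat) \<Rightarrow> (nat \<Rightarrow> nat) \<Rightarrow> nat \<Rightarrow> nat \<Rightarrow> real" where
  "GM A C d e k m = (if 0 < card C - 1 \<and> 0 < card A - 1
     then 1 - ((real (card A - 1) - real (e m) + 1) * (real (card C - 1) - real (d k) + 1))
              / (real (card A - 1) * real (card C - 1))
     else 1)"

lemma GM_swap: "GM C A e d m k = GM A C d e k m"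
  by (simp add: GM_def mult.commute conj_commute)

lemma alg_core:
  fixes X :: "nat \<Rightarrow> real" and B W K em :: real
  assumes fin: "finite C" and m: "m \<in> C" and sX: "sum X C = B" and B: "2 \<le> B" and W: "0 < W"
    and Xm: "X m = em - 1"
  shows "(\<Sum>j\<in>C. X j / B * (1 - ((B - 1) - (em - (if j = m then 1 else 0)) + 1) * K / ((B - 1) * W)))
         = 1 - (B - em + 1) * K / (B * W)"
proof -
  define c where "c = K / (B * (B - 1) * W)"
  have t: "X j / B * (1 - ((B - 1) - (em - (if j = m then 1 else 0)) + 1) * K / ((B - 1) * W))
      = X j / B - (X j * (B - em) + (if j = m then X j else 0)) * c" for j
    using B W unfolding c_def by (cases "j = m") (simp_all add: field_simps)
  have s1: "(\<Sum>j\<in>C. X j / B) = B / B" using sX by (simp add: sum_divide_distrib[symmetric])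
  have s2: "(\<Sum>j\<in>C. (X j * (B - em) + (if j = m then X j else 0)) * c) = (B * (B - em) + X m) * c"
  proof -
    have "(\<Sum>j\<in>C. (X j * (B - em) + (if j = m then X j else 0)) * c)
        = (\<Sum>j\<in>C. (X j * (B - em) + (if j = m then X j else 0))) * c"
      by (simp add: sum_distrib_right)
    also have "(\<Sum>j\<in>C. (X j * (B - em) + (if j = m then X j else 0)))
        = (\<Sum>j\<in>C. X j * (B - em)) + (\<Sum>j\<in>C. (if j = m then X j else 0))"
      by (rule sum.distrib)
    also have "(\<Sum>j\<in>C. X j * (B - em)) = B * (B - em)" using sX by (simp add: sum_distrib_right[symmetric])
    also have "(\<Sum>j\<in>C. (if j = m then X j else 0)) = X m" using fin m by simp
    finally show ?thesis .
  qed
  have "(\<Sum>j\<in>C. X j / B * (1 - ((B - 1) - (em - (if j = m then 1 else 0)) + 1) * K / ((B - 1) * W)))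
      = B / B - (B * (B - em) + X m) * c"
    unfolding t sum_subtractf s1 s2 by simp
  also have "\<dots> = 1 - (B - em + 1) * K / (B * W)"
    using B W unfolding c_def Xm by (simp add: field_simps)
  finally show ?thesis .
qed


lemma M_stepA:
  assumes fin: "finite A" "finite C" and i: "i \<in> A" and di: "d i = 1" and cA: "2 \<le> card A"
    and k: "k \<in> A" and m: "m \<in> C" and e1: "\<forall>j\<in>C. 1 \<le> e j"
    and sd: "sum d A = card A + card C - 1" and se: "sum e C = card A + card C - 1"
    and IH: "\<And>e'. sum e' C = card (A - {i}) + card C - 1 \<Longrightarrow> k \<in> A - {i} \<Longrightarrow>
       real (card {T \<in> trs (A - {i}) C d e'. (k, m) \<in> T}) = FN (A - {i}) C d e' * GM (A - {i}) C d e' k m"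
  shows "real (card {T \<in> trs A C d e. (k, m) \<in> T}) = FN A C d e * GM A C d e k m"
proof -
  have Cne: "C \<noteq> {}" using m by auto
  have "card (A - {i}) \<noteq> 0" using i cA fin by (simp add: card_Diff_singleton)
  then have Ai: "A - {i} \<noteq> {}" by (metis card.empty)
  have sumj: "sum (e(j := e j - 1)) C = card (A - {i}) + card C - 1" if "j \<in> C" for j
    using sum_dec_nat[OF fin(2) that, of e] e1 that se fin i cA by simp
  have sdi: "sum d (A - {i}) = card (A - {i}) + card C - 1"
    using card_diff_sum[of A i d C, OF fin(1) i di cA sd] .
  have sX: "(\<Sum>j\<in>C. real (e j) - 1) = real (card A - 1)"
    by (rule sum_minus1) (use fin se cA in auto)
  have leaf: "card {T \<in> trs A C d e. (k, m) \<in> T} =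
      (\<Sum>j\<in>C. card {T' \<in> trs (A - {i}) C d (e(j := e j - 1)). (k, m) \<in> insert (i, j) T'})"
    by (rule card_leaf) (use fin i di e1 in auto)
  show ?thesis
  proof (cases "i = k")
    case True
    have "(\<Sum>j\<in>C. card {T' \<in> trs (A - {i}) C d (e(j := e j - 1)). (k, m) \<in> insert (i, j) T'})
        = (\<Sum>j\<in>C. if j = m then card (trs (A - {i}) C d (e(m := e m - 1))) else 0)"
    proof (rule sum.cong[OF refl])
      fix j assume "j \<in> C"
      have "{T' \<in> trs (A - {i}) C d (e(j := e j - 1)). (k, m) \<in> insert (i, j) T'}
          = (if j = m then trs (A - {i}) C d (e(j := e j - 1)) else {})"
        using True by (auto simp: trs_def gtree_def)
      then show "card {T' \<in> trs (A - {i}) C d (e(j := e j - 1)). (k, m) \<in> insert (i, j) T'}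
          = (if j = m then card (trs (A - {i}) C d (e(m := e m - 1))) else 0)" by simp
    qed
    also have "\<dots> = card (trs (A - {i}) C d (e(m := e m - 1)))" using fin m by simp
    finally have c1: "card {T \<in> trs A C d e. (k, m) \<in> T} = card (trs (A - {i}) C d (e(m := e m - 1)))"
      using leaf by simp
    have "real (card (trs (A - {i}) C d (e(m := e m - 1)))) = FN (A - {i}) C d (e(m := e m - 1))"
      by (rule N_formula) (use fin Ai Cne sdi sumj m in auto)
    also have "\<dots> = FN A C d e * ((real (e m) - 1) / real (card A - 1))"
      using FN_dec[of A C i d m e, OF fin i di cA m] e1 m by simp
    also have "(real (e m) - 1) / real (card A - 1) = GM A C d e k m"
    proof (cases "card C = 1")
      case True
      then have "C = {m}" using m by (metis card_1_singletonE singletonD)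
      then have "e m = card A" using se by simp
      then show ?thesis using True cA by (simp add: GM_def of_nat_diff)
    next
      case False
      have "card C \<noteq> 0" using Cne fin by simp
      then have W: "0 < card C - 1" using False by linarith
      have dk: "d k = 1" using True di by simp
      have B: "real (card A - 1) \<noteq> 0" using cA by simp
      have Wn: "real (card C - 1) \<noteq> 0" using W by simp
      have aux: "1 - ((b - em + 1) * (w - 1 + 1)) / (b * w) = (em - 1) / b"
        if "b \<noteq> 0" "w \<noteq> 0" for b w em :: real using that by (simp add: field_simps)
      have G: "GM A C d e k m = 1 - ((real (card A - 1) - real (e m) + 1) * (real (card C - 1) - 1 + 1))
          / (real (card A - 1) * real (card C - 1))"
        unfolding GM_def dk of_nat_1 by (rule if_P) (use W cA in auto)
      show ?thesis unfolding G aux[OF B Wn] by (rule refl)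
    qed
    finally have X: "real (card (trs (A - {i}) C d (e(m := e m - 1)))) = FN A C d e * GM A C d e k m" .
    show ?thesis unfolding c1 by (rule X)
  next
    case False
    have "(\<Sum>j\<in>C. card {T' \<in> trs (A - {i}) C d (e(j := e j - 1)). (k, m) \<in> insert (i, j) T'})
        = (\<Sum>j\<in>C. card {T' \<in> trs (A - {i}) C d (e(j := e j - 1)). (k, m) \<in> T'})"
      using False by simp
    then have "real (card {T \<in> trs A C d e. (k, m) \<in> T})
        = (\<Sum>j\<in>C. real (card {T' \<in> trs (A - {i}) C d (e(j := e j - 1)). (k, m) \<in> T'}))"
      using leaf by simp
    also have "\<dots> = (\<Sum>j\<in>C. FN (A - {i}) C d (e(j := e j - 1)) * GM (A - {i}) C d (e(j := e j - 1)) k m)"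
      by (rule sum.cong[OF refl], rule IH) (use sumj k False in auto)
    also have "\<dots> = (\<Sum>j\<in>C. FN A C d e * ((real (e j) - 1) / real (card A - 1)
                      * GM (A - {i}) C d (e(j := e j - 1)) k m))"
    proof (rule sum.cong[OF refl])
      fix j assume j: "j \<in> C"
      show "FN (A - {i}) C d (e(j := e j - 1)) * GM (A - {i}) C d (e(j := e j - 1)) k m
          = FN A C d e * ((real (e j) - 1) / real (card A - 1) * GM (A - {i}) C d (e(j := e j - 1)) k m)"
        using FN_dec[of A C i d j e, OF fin i di cA j] e1 j by simp
    qed
    also have "\<dots> = FN A C d e * (\<Sum>j\<in>C. (real (e j) - 1) / real (card A - 1)
                      * GM (A - {i}) C d (e(j := e j - 1)) k m)"
      by (simp add: sum_distrib_left)
    also have "(\<Sum>j\<in>C. (real (e j) - 1) / real (card A - 1) * GM (A - {i}) C d (e(j := e j - 1)) k m)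
        = GM A C d e k m"
    proof (cases "card C = 1")
      case True
      have "GM (A - {i}) C d (e(j := e j - 1)) k m = 1" for j using True by (simp add: GM_def)
      moreover have "GM A C d e k m = 1" using True by (simp add: GM_def)
      ultimately show ?thesis using sX cA by (simp add: sum_divide_distrib[symmetric])
    next
      case CF: False
      have "card C \<noteq> 0" using Cne fin by simp
      then have W: "0 < card C - 1" using CF by linarith
      show ?thesis
      proof (cases "card A = 2")
        case True
        have "card (A - {i}) = 1" using True fin i by simp
        then have "A - {i} = {k}" using k False by (metis card_1_singletonE Diff_iff singletonD singleton_iff)
        then have "sum d A = d i + d k" using sum.remove[OF fin(1) i, of d] by simp
        then have "d k = card C" using sd di True by simp
        then have "GM A C d e k m = 1" using True W by (simp add: GM_def of_nat_diff)
        moreover have "GM (A - {i}) C d (e(j := e j - 1)) k m = 1" for j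
          using True fin i by (simp add: GM_def)
        ultimately show ?thesis using sX cA by (simp add: sum_divide_distrib[symmetric])
      next
        case AF: False
        then have A3: "3 \<le> card A" using cA by simp
        define B where "B = real (card A - 1)"
        define Wr where "Wr = real (card C - 1)"
        define K where "K = real (card C - 1) - real (d k) + 1"
        have GMj: "GM (A - {i}) C d (e(j := e j - 1)) k m
            = 1 - ((B - 1) - (real (e m) - (if j = m then 1 else 0)) + 1) * K / ((B - 1) * Wr)"
          if "j \<in> C" for j
        proof -
          have ca: "card (A - {i}) - 1 = card A - 2" using fin i by simp
          have r: "real (card A - 2) = B - 1" using A3 B_def by (simp add: of_nat_diff)
          have em: "real ((e(j := e j - 1)) m) = real (e m) - (if j = m then 1 else 0)"
            using e1 m by (auto simp: of_nat_diff)
          have c2: "0 < card A - 2" using A3 by simp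
          show ?thesis unfolding GM_def ca r em using c2 W K_def Wr_def by simp
        qed
        have "(\<Sum>j\<in>C. (real (e j) - 1) / real (card A - 1) * GM (A - {i}) C d (e(j := e j - 1)) k m)
            = (\<Sum>j\<in>C. (real (e j) - 1) / B * (1 - ((B - 1) - (real (e m) - (if j = m then 1 else 0)) + 1) * K / ((B - 1) * Wr)))"
          using GMj B_def by (intro sum.cong) auto
        also have "\<dots> = 1 - (B - real (e m) + 1) * K / (B * Wr)"
        proof (rule alg_core)
          show "finite C" "m \<in> C" by (fact fin(2)) (fact m)
          show "(\<Sum>j\<in>C. real (e j) - 1) = B" using sX B_def by simp
          show "2 \<le> B" using A3 B_def by (simp add: of_nat_diff)
          show "0 < Wr" using W Wr_def by simp
        qed simp
        also have "\<dots> = GM A C d e k m" unfolding GM_def B_def K_def Wr_def using A3 W by simp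
        finally show ?thesis .
      qed
    qed
    finally show ?thesis .
  qed
qed



theorem M_formula:
  "finite A \<Longrightarrow> finite C \<Longrightarrow> k \<in> A \<Longrightarrow> m \<in> C \<Longrightarrow>
   sum d A = card A + card C - 1 \<Longrightarrow> sum e C = card A + card C - 1 \<Longrightarrow>
   real (card {T \<in> trs A C d e. (k, m) \<in> T}) = FN A C d e * GM A C d e k m"
proof (induction "card A + card C" arbitrary: A C d e k m rule: less_induct)
  case less
  note fA = less.prems(1) and fC = less.prems(2) and k = less.prems(3) and m = less.prems(4)
    and sd = less.prems(5) and se = less.prems(6)
  have Ane: "A \<noteq> {}" and Cne: "C \<noteq> {}" using k m by auto
  show ?case
  proof (cases "\<exists>i\<in>A. d i = 0")
    case True
    then obtain i where i: "i \<in> A" "d i = 0" by blast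
    have "trs A C d e = {}" by (rule trs_zeroA) (use fA fC i Cne in auto)
    moreover have "FN A C d e = 0" using Mu_neg[of i A "\<lambda>i. int (d i) - 1"] i unfolding FN_def by simp
    ultimately show ?thesis by simp
  next
    case nd: False
    show ?thesis
    proof (cases "\<exists>j\<in>C. e j = 0")
      case True
      then obtain j where j: "j \<in> C" "e j = 0" by blast
      have "trs A C d e = {}" by (rule trs_zeroC) (use fA fC j Ane in auto)
      moreover have "FN A C d e = 0" using Mu_neg[of j C "\<lambda>j. int (e j) - 1"] j unfolding FN_def by simp
      ultimately show ?thesis by simp
    next
      case ne: False
      have d1: "\<forall>i\<in>A. 1 \<le> d i" using nd by (auto simp: Suc_le_eq)
      have e1: "\<forall>j\<in>C. 1 \<le> e j" using ne by (auto simp: Suc_le_eq)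
      show ?thesis
      proof (cases "card A = 1 \<and> card C = 1")
        case True
        then obtain i j where A: "A = {i}" and C: "C = {j}" by (auto simp: card_1_singleton_iff)
        have di: "d i = 1" "e j = 1" using sd se A C by auto
        have km: "k = i" "m = j" using k m A C by auto
        have "{T \<in> trs A C d e. (k, m) \<in> T} = {{(i, j)}}"
          unfolding A C trs_single[of d i e j, OF di] km by auto
        then show ?thesis using di A C by (simp add: FN_def Mu_def GM_def)
      next
        case False
        from leaf_exists[OF fA fC Ane Cne d1 e1 sd se False]
        consider (a) i where "i \<in> A" "d i = 1" "2 \<le> card A" | (c) j where "j \<in> C" "e j = 1" "2 \<le> card C"
          by blast
        then show ?thesis
        proof cases
          case a
          show ?thesis
          proof (rule M_stepA[of A C i d k m e, OF fA fC a k m e1 sd se])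
            fix e' assume "sum e' C = card (A - {i}) + card C - 1" "k \<in> A - {i}"
            then show "real (card {T \<in> trs (A - {i}) C d e'. (k, m) \<in> T}) = FN (A - {i}) C d e' * GM (A - {i}) C d e' k m"
              using card_diff_sum[of A i d C, OF fA a sd] fA fC a m
              by (intro less.hyps) (auto simp: card_Diff_singleton)
          qed
        next
          case c
          have sd': "sum e C = card C + card A - 1" using se by simp
          have "real (card {T \<in> trs C A e d. (m, k) \<in> T}) = FN C A e d * GM C A e d m k"
          proof (rule M_stepA[of C A j e m k d, OF fC fA c m k d1 sd'])
            show "sum d A = card C + card A - 1" using sd by simp
            fix d' assume "sum d' A = card (C - {j}) + card A - 1" "m \<in> C - {j}"
            then show "real (card {T \<in> trs (C - {j}) A e d'. (m, k) \<in> T}) = FN (C - {j}) A e d' * GM (C - {j}) A e d' m k"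
              using card_diff_sum[of C j e A, OF fC c sd'] fA fC c k
              by (intro less.hyps) (auto simp: card_Diff_singleton)
          qed
          then show ?thesis using card_trs_swap[of C A e d "\<lambda>T. (m, k) \<in> T"] FN_swap[of C A e d]
              GM_swap[of C A e d m k] by (simp add: mem_swap_image)
        qed
      qed
    qed
  qed
qed

lemma multinom_Mu: "multinom n (map x [0..<w+1]) = Mu n x {..w}"
proof -
  have s: "set [0..<w+1] = {..w}" by auto
  have "sum_list (map x [0..<w+1]) = sum x (set [0..<w+1])"
    by (rule sum_list_distinct_conv_sum_set) simp
  then have 1: "sum_list (map x [0..<w+1]) = sum x {..w}" by (simp only: s)
  have "(\<Prod>j\<in>set [0..<w+1]. fact (nat (x j)) :: real) = (\<Prod>j\<leftarrow>[0..<w+1]. fact (nat (x j)))"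
    by (rule prod.distinct_set_conv_list) simp
  then have 2: "(\<Prod>k\<leftarrow>map x [0..<w+1]. fact (nat k)) = (\<Prod>j\<in>{..w}. fact (nat (x j)) :: real)"
    by (simp only: s map_map comp_def)
  note 1 2
  moreover have "(\<forall>k\<in>set (map x [0..<w+1]). 0 \<le> k) \<longleftrightarrow> (\<forall>j\<in>{..w}. 0 \<le> x j)" using s by auto
  ultimately show ?thesis unfolding multinom_def Mu_def by simp
qed

theorem lemmaB2:
  fixes b w k m :: nat and d e :: "nat \<Rightarrow> nat"
  assumes "(\<Sum>i\<le>b. d i) = b + w + 1"
    and "(\<Sum>j\<le>w. e j) = b + w + 1"
    and "k \<le> b" and "m \<le> w"
  shows "real (card {T. bip_spanning_tree b w T \<and> (k, m) \<in> T \<and>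
                       (\<forall>i\<le>b. deg_a T i = d i) \<and> (\<forall>j\<le>w. deg_c T j = e j)})
         = multinom b (map (\<lambda>j. int (e j) - 1) [0..<w+1])
           * multinom w (map (\<lambda>i. int (d i) - 1) [0..<b+1])
           * (if 0 < w \<and> 0 < b
              then 1 - ((real b - real (e m) + 1) * (real w - real (d k) + 1)) / (real b * real w)
              else 1)"
proof -
  have eq: "{T. bip_spanning_tree b w T \<and> (k, m) \<in> T \<and>
                       (\<forall>i\<le>b. deg_a T i = d i) \<and> (\<forall>j\<le>w. deg_c T j = e j)}
      = {T \<in> trs {..b} {..w} d e. (k, m) \<in> T}"
    unfolding trs_def bip_spanning_tree_gtree by auto
  have M: "real (card {T \<in> trs {..b} {..w} d e. (k, m) \<in> T}) = FN {..b} {..w} d e * GM {..b} {..w} d e k m"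
    by (rule M_formula) (use assms in auto)
  show ?thesis unfolding eq M FN_def GM_def multinom_Mu by simp
qed

end
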